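(* Let $\mathcal{D}$ be an algebra and vector lattice of bounded real functions with the Stone property, and $(\mathcal{E},\mathcal{D})$ a bilinear form on which the unit contraction operates, with killing functional $K$. Then $K(f^2)\le\mathcal{E}(f)$ for all $f\in\mathcal{D}_0$, and $\mathcal{Q}(f,g):=\mathcal{E}(f,g)-K(fg)$, $f,g\in\mathcal{D}_0$, defines a bilinear form $(\mathcal{Q},\mathcal{D}_0)$ on which the unit contraction operates and which has zero killing.
   Context: Stone property: $f\wedge1\in\mathcal{D}$ for $f\in\mathcal{D}$. Unit contraction $T_1(x)=\max(x,0)\wedge1$; operates on $(\mathcal{E},\mathcal{D})$ if $\mathcal{E}(T_1(f))\le\mathcal{E}(f)$. Bilinear form: symmetric nonnegative definite bilinear map, $\mathcal{E}(f)=\mathcal{E}(f,f)$. For $f\ge0$ in $\mathcal{D}$, $E_f:=\{\varphi\in\mathcal{D}:\mathbf 1_{\{f>0\}}\le\varphi\le\mathbf 1\}$; $\mathcal{D}_0^+:=\{f\in\mathcal{D},f\ge0: E_f\ne\emptyset\}$, $\mathcal{D}_0$ its linear span (an ideal of $\mathcal{D}$, so $fg\in\mathcal{D}_0$ for $f,g\in\mathcal{D}_0$). Killing functional: $K(f):=\inf\{\mathcal{E}(f,\varphi):\varphi\in E_f\}$ for $f\in\mathcal{D}_0^+$, extended to $\mathcal{D}_0$ by $K(f)=K(f^+)-K(f^-)$. A form $(\mathcal{Q},\mathcal{D}_0)$ has zero killing if its killing functional (defined by the same recipe with $\mathcal{Q},\mathcal{D}_0$ in place of $\mathcal{E},\mathcal{D}$)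 vanishes identically. *)

theory Defs
  imports Complex_Main
begin

definition algebra_vector_lattice :: "('x \<Rightarrow> real) set \<Rightarrow> bool" where
  "algebra_vector_lattice D \<longleftrightarrow>
     (\<lambda>x. 0) \<in> D \<and>
     (\<forall>f\<in>D. \<forall>g\<in>D. (\<lambda>x. f x + g x) \<in> D) \<and>
     (\<forall>f\<in>D. \<forall>c::real. (\<lambda>x. c * f x) \<in> D) \<and>
     (\<forall>f\<in>D. \<forall>g\<in>D. (\<lambda>x. f x * g x) \<in> D) \<and>
     (\<forall>f\<in>D. \<forall>g\<in>D. (\<lambda>x. max (f x) (g x)) \<in> D) \<and>
     (\<forall>f\<in>D. \<forall>g\<in>D. (\<lambda>x. min (f x) (g x)) \<in> D)"

definition bounded_functions :: "('x \<Rightarrow> real) set \<Rightarrow> bool" where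
  "bounded_functions D \<longleftrightarrow> (\<forall>f\<in>D. \<exists>C. \<forall>x. \<bar>f x\<bar> \<le> C)"

definition stone_property :: "('x \<Rightarrow> real) set \<Rightarrow> bool" where
  "stone_property D \<longleftrightarrow> (\<forall>f\<in>D. (\<lambda>x. min (f x) 1) \<in> D)"

definition bilinear_form :: "('x \<Rightarrow> real) set \<Rightarrow> (('x \<Rightarrow> real) \<Rightarrow> ('x \<Rightarrow> real) \<Rightarrow> real) \<Rightarrow> bool" where
  "bilinear_form D E \<longleftrightarrow>
     (\<forall>f\<in>D. \<forall>g\<in>D. \<forall>h\<in>D. E (\<lambda>x. f x + g x) h = E f h + E g h) \<and>
     (\<forall>f\<in>D. \<forall>g\<in>D. \<forall>c::real. E (\<lambda>x. c * f x) g = c * E f g) \<and>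
     (\<forall>f\<in>D. \<forall>g\<in>D. E f g = E g f) \<and>
     (\<forall>f\<in>D. 0 \<le> E f f)"

definition T1 :: "real \<Rightarrow> real" where
  "T1 t = min (max t 0) 1"

definition unit_contraction_operates :: "('x \<Rightarrow> real) set \<Rightarrow> (('x \<Rightarrow> real) \<Rightarrow> ('x \<Rightarrow> real) \<Rightarrow> real) \<Rightarrow> bool" where
  "unit_contraction_operates D E \<longleftrightarrow>
     (\<forall>f\<in>D. (\<lambda>x. T1 (f x)) \<in> D \<and> E (\<lambda>x. T1 (f x)) (\<lambda>x. T1 (f x)) \<le> E f f)"

definition Eset :: "('x \<Rightarrow> real) set \<Rightarrow> ('x \<Rightarrow> real) \<Rightarrow> ('x \<Rightarrow> real) set" where
  "Eset D f = {\<phi>\<in>D. \<forall>x. (if f x > 0 then 1 else 0) \<le> \<phi> x \<and> \<phi> x \<le> 1}"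

definition D0plus :: "('x \<Rightarrow> real) set \<Rightarrow> ('x \<Rightarrow> real) set" where
  "D0plus D = {f\<in>D. (\<forall>x. 0 \<le> f x) \<and> Eset D f \<noteq> {}}"

definition D0 :: "('x \<Rightarrow> real) set \<Rightarrow> ('x \<Rightarrow> real) set" where
  "D0 D = {f. \<exists>(n::nat) (c::nat \<Rightarrow> real) g. (\<forall>i<n. g i \<in> D0plus D) \<and>
                f = (\<lambda>x. \<Sum>i<n. c i * g i x)}"

definition killing_plus :: "('x \<Rightarrow> real) set \<Rightarrow> (('x \<Rightarrow> real) \<Rightarrow> ('x \<Rightarrow> real) \<Rightarrow> real) \<Rightarrow> ('x \<Rightarrow> real) \<Rightarrow> real" where
  "killing_plus D E f = Inf ((\<lambda>\<phi>. E f \<phi>) ` Eset D f)"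

definition killing :: "('x \<Rightarrow> real) set \<Rightarrow> (('x \<Rightarrow> real) \<Rightarrow> ('x \<Rightarrow> real) \<Rightarrow> real) \<Rightarrow> ('x \<Rightarrow> real) \<Rightarrow> real" where
  "killing D E f = killing_plus D E (\<lambda>x. max (f x) 0) - killing_plus D E (\<lambda>x. max (- f x) 0)"

end

theory Submission
  imports Defs
begin


lemma quad_lim:
  fixes a b :: real
  assumes "\<And>s. s > 0 \<Longrightarrow> 0 \<le> 2*s*a + s^2*b"
  shows "0 \<le> a"
proof (rule ccontr)
  assume "\<not> 0 \<le> a" hence a: "a < 0" by simp
  show False
  proof (cases "b \<le> 0")
    case True
    have "0 \<le> 2*1*a + 1^2*b" using assms[of 1] by simp
    thus False using a True by simp
  next
    case False
    have s: "-a/b > 0" using a False by (simp add: divide_neg_pos)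
    have "0 \<le> 2*(-a/b)*a + (-a/b)^2*b" using assms[OF s] by simp
    also have "2*(-a/b)*a + (-a/b)^2*b = - (a^2/b)" using False by (simp add: power2_eq_square field_simps)
    finally show False using a False by (smt (verit) divide_pos_pos zero_less_power2)
  qed
qed

lemma eps_lim:
  fixes x y c :: real
  assumes "\<And>d. d > 0 \<Longrightarrow> x \<le> y + d * c"
  shows "x \<le> y"
proof (rule ccontr)
  assume "\<not> x \<le> y"
  define d where "d = (x - y) / (2 * (\<bar>c\<bar> + 1))"
  have dpos: "d > 0" using \<open>\<not> x \<le> y\<close> by (simp add: d_def)
  have "d * c \<le> d * \<bar>c\<bar>" using dpos by (simp add: mult_left_mono)
  also have "d * \<bar>c\<bar> < d * (\<bar>c\<bar> + 1)" using dpos by simp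
  also have "d * (\<bar>c\<bar> + 1) = (x - y) / 2" by (simp add: d_def field_simps)
  finally have "d * c < (x - y) / 2" . thus False using assms[OF dpos] \<open>\<not> x \<le> y\<close> by simp
qed

locale KS =
  fixes D :: "('x \<Rightarrow> real) set" and E :: "('x \<Rightarrow> real) \<Rightarrow> ('x \<Rightarrow> real) \<Rightarrow> real"
  assumes avl: "algebra_vector_lattice D"
    and bdd: "bounded_functions D"
    and stone: "stone_property D"
    and bil: "bilinear_form D E"
    and uc: "unit_contraction_operates D E"
begin

lemma zeroD: "(\<lambda>x. 0) \<in> D" using avl unfolding algebra_vector_lattice_def by blast
lemma addD: "f \<in> D \<Longrightarrow> g \<in> D \<Longrightarrow> (\<lambda>x. f x + g x) \<in> D" using avl unfolding algebra_vector_lattice_def by blast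
lemma scaleD: "f \<in> D \<Longrightarrow> (\<lambda>x. c * f x) \<in> D" using avl unfolding algebra_vector_lattice_def by blast
lemma multD: "f \<in> D \<Longrightarrow> g \<in> D \<Longrightarrow> (\<lambda>x. f x * g x) \<in> D" using avl unfolding algebra_vector_lattice_def by blast
lemma maxD: "f \<in> D \<Longrightarrow> g \<in> D \<Longrightarrow> (\<lambda>x. max (f x) (g x)) \<in> D" using avl unfolding algebra_vector_lattice_def by blast
lemma minD: "f \<in> D \<Longrightarrow> g \<in> D \<Longrightarrow> (\<lambda>x. min (f x) (g x)) \<in> D" using avl unfolding algebra_vector_lattice_def by blast
lemma stoneD: "f \<in> D \<Longrightarrow> (\<lambda>x. min (f x) 1) \<in> D" using stone unfolding stone_property_def by blast
lemma bddD: "f \<in> D \<Longrightarrow> \<exists>C. \<forall>x. \<bar>f x\<bar> \<le> C" using bdd unfolding bounded_functions_def by blast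
lemma T1D: "f \<in> D \<Longrightarrow> (\<lambda>x. T1 (f x)) \<in> D" using uc unfolding unit_contraction_operates_def by blast
lemma T1E: "f \<in> D \<Longrightarrow> E (\<lambda>x. T1 (f x)) (\<lambda>x. T1 (f x)) \<le> E f f" using uc unfolding unit_contraction_operates_def by blast

lemma diffD: "f \<in> D \<Longrightarrow> g \<in> D \<Longrightarrow> (\<lambda>x. f x - g x) \<in> D"
  using addD[of f "\<lambda>x. (-1) * g x"] scaleD[of g "-1"] by simp
lemma negD: "f \<in> D \<Longrightarrow> (\<lambda>x. - f x) \<in> D"
  using scaleD[of f "-1"] by simp
lemma posD: "f \<in> D \<Longrightarrow> (\<lambda>x. max (f x) 0) \<in> D"
  using maxD[OF _ zeroD] by blast
lemma negpD: "f \<in> D \<Longrightarrow> (\<lambda>x. max (- f x) 0) \<in> D"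
  using posD[OF negD] by blast
lemma absD: "f \<in> D \<Longrightarrow> (\<lambda>x. \<bar>f x\<bar>) \<in> D"
proof -
  assume f: "f \<in> D"
  have "(\<lambda>x. max (f x) (- f x)) \<in> D" using maxD[OF f negD[OF f]] .
  moreover have "(\<lambda>x. max (f x) (- f x)) = (\<lambda>x. \<bar>f x\<bar>)" by (rule ext) auto
  ultimately show ?thesis by simp
qed
lemma minconstD: "f \<in> D \<Longrightarrow> t > 0 \<Longrightarrow> (\<lambda>x. min (f x) t) \<in> D"
proof -
  assume f: "f \<in> D" and t: "t > 0"
  have "(\<lambda>x. t * min ((1/t) * f x) 1) \<in> D" by (intro scaleD stoneD f)
  moreover have "(\<lambda>x. t * min ((1/t) * f x) 1) = (\<lambda>x. min (f x) t)"
    using t by (auto simp: min_def field_simps)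
  ultimately show ?thesis by simp
qed

lemma Eadd: "f \<in> D \<Longrightarrow> g \<in> D \<Longrightarrow> h \<in> D \<Longrightarrow> E (\<lambda>x. f x + g x) h = E f h + E g h"
  using bil unfolding bilinear_form_def by blast
lemma Escale: "f \<in> D \<Longrightarrow> g \<in> D \<Longrightarrow> E (\<lambda>x. c * f x) g = c * E f g"
  using bil unfolding bilinear_form_def by blast
lemma Esym: "f \<in> D \<Longrightarrow> g \<in> D \<Longrightarrow> E f g = E g f"
  using bil unfolding bilinear_form_def by blast
lemma Epos: "f \<in> D \<Longrightarrow> 0 \<le> E f f"
  using bil unfolding bilinear_form_def by blast
lemma Eadd2: "f \<in> D \<Longrightarrow> g \<in> D \<Longrightarrow> h \<in> D \<Longrightarrow> E h (\<lambda>x. f x + g x) = E h f + E h g"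
  by (simp add: Esym[of h] addD Eadd)
lemma Escale2: "f \<in> D \<Longrightarrow> g \<in> D \<Longrightarrow> E g (\<lambda>x. c * f x) = c * E g f"
  by (simp add: Esym[of g] scaleD Escale)
lemma Ediff: "f \<in> D \<Longrightarrow> g \<in> D \<Longrightarrow> h \<in> D \<Longrightarrow> E (\<lambda>x. f x - g x) h = E f h - E g h"
  using Eadd[of f "\<lambda>x. (-1) * g x" h] Escale[of g h "-1"] scaleD[of g "-1"] by simp
lemma Ediff2: "f \<in> D \<Longrightarrow> g \<in> D \<Longrightarrow> h \<in> D \<Longrightarrow> E h (\<lambda>x. f x - g x) = E h f - E h g"
  by (simp add: Esym[of h] diffD Ediff)
lemma Ezero: "g \<in> D \<Longrightarrow> E (\<lambda>x. 0) g = 0"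
  using Escale[OF zeroD, of g 0] by simp
lemma Ezero2: "g \<in> D \<Longrightarrow> E g (\<lambda>x. 0) = 0"
  using Ezero zeroD Esym by metis
lemma Equad: "u \<in> D \<Longrightarrow> v \<in> D \<Longrightarrow>
  E (\<lambda>x. u x + s * v x) (\<lambda>x. u x + s * v x) = E u u + 2*s*E u v + s^2 * E v v"
proof -
  assume u: "u \<in> D" and v: "v \<in> D"
  have sv: "(\<lambda>x. s * v x) \<in> D" using v by (rule scaleD)
  have w: "(\<lambda>x. u x + s * v x) \<in> D" using u sv by (rule addD)
  have "E (\<lambda>x. u x + s * v x) (\<lambda>x. u x + s * v x) = E u (\<lambda>x. u x + s * v x) + s * E v (\<lambda>x. u x + s * v x)"
    using Eadd[OF u sv w] Escale[OF v w] by simp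
  also have "\<dots> = E u u + s * E u v + s * (E v u + s * E v v)"
    using Eadd2[OF u sv u] Eadd2[OF u sv v] Escale2[OF v u] Escale2[OF v v] by simp
  also have "\<dots> = E u u + 2*s*E u v + s^2 * E v v"
    using Esym[OF u v] by (simp add: power2_eq_square algebra_simps)
  finally show ?thesis .
qed


lemma EsetI: "\<phi> \<in> D \<Longrightarrow> (\<And>x. 0 \<le> \<phi> x) \<Longrightarrow> (\<And>x. \<phi> x \<le> 1) \<Longrightarrow> (\<And>x. f x > 0 \<Longrightarrow> \<phi> x = 1) \<Longrightarrow> \<phi> \<in> Eset D f"
  unfolding Eset_def by auto
lemma EsetD:
  assumes "\<phi> \<in> Eset D f"
  shows "\<phi> \<in> D" "0 \<le> \<phi> x" "\<phi> x \<le> 1" "f x > 0 \<Longrightarrow> \<phi> x = 1"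
proof -
  have *: "\<phi> \<in> D" "\<And>x. (if f x > 0 then 1 else 0) \<le> \<phi> x \<and> \<phi> x \<le> 1" using assms unfolding Eset_def by auto
  show "\<phi> \<in> D" by (rule *)
  show "0 \<le> \<phi> x" using *(2)[of x] by (auto split: if_splits)
  show "\<phi> x \<le> 1" using *(2)[of x] by auto
  show "f x > 0 \<Longrightarrow> \<phi> x = 1" using *(2)[of x] by auto
qed
lemma Eset_mono: "(\<And>x. f x > 0 \<Longrightarrow> g x > 0) \<Longrightarrow> Eset D g \<subseteq> Eset D f"
  by (auto intro!: EsetI dest: EsetD)

lemma disj:
  assumes h: "h \<in> D" and g: "g \<in> D" and h01: "\<And>x. 0 \<le> h x \<and> h x \<le> 1" and g0: "\<And>x. 0 \<le> g x"
    and dj: "\<And>x. g x > 0 \<Longrightarrow> h x = 0"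
  shows "E h g \<le> 0"
proof -
  have "0 \<le> 2*s*(- E h g) + s^2 * E g g" if "s > 0" for s
  proof -
    have eq: "(\<lambda>x. T1 (h x + (-s) * g x)) = h"
    proof
      fix x show "T1 (h x + (-s) * g x) = h x"
        using h01[of x] g0[of x] dj[of x] \<open>s>0\<close>
        by (cases "g x > 0") (auto simp: T1_def mult_pos_pos)
    qed
    have "E h h \<le> E (\<lambda>x. h x + (-s) * g x) (\<lambda>x. h x + (-s) * g x)"
      using T1E[OF addD[OF h scaleD[OF g]], of "-s", unfolded eq] .
    also have "\<dots> = E h h + 2*(-s)*E h g + (-s)^2 * E g g" by (rule Equad[OF h g])
    finally show ?thesis by simp
  qed
  from quad_lim[OF this] show ?thesis by simp
qed

lemma disjB:
  assumes h: "h \<in> D" and g: "g \<in> D" and h0: "\<And>x. 0 \<le> h x" and g0: "\<And>x. 0 \<le> g x"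
    and dj: "\<And>x. g x > 0 \<Longrightarrow> h x = 0"
  shows "E h g \<le> 0"
proof -
  obtain C where C: "\<And>x. \<bar>h x\<bar> \<le> C" using bddD[OF h] by blast
  define M where "M = C + 1"
  have C0: "0 \<le> C" using C[of undefined] by linarith
  have M: "M > 0" "\<And>x. h x \<le> M" using C0 C by (auto simp: M_def abs_le_iff, smt (verit))
  have "E (\<lambda>x. (1/M) * h x) g \<le> 0"
  proof (rule disj[OF scaleD[OF h] g _ g0])
    show "0 \<le> 1 / M * h x \<and> 1 / M * h x \<le> 1" for x using M h0[of x] by (auto simp: field_simps)
    show "g x > 0 \<Longrightarrow> 1 / M * h x = 0" for x using dj by simp
  qed
  thus ?thesis using Escale[OF h g, of "1/M"] M by (simp add: divide_le_0_iff)
qed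

lemma nonneg:
  assumes f: "f \<in> D" and f0: "\<And>x. 0 \<le> f x" and p: "\<phi> \<in> Eset D f"
  shows "0 \<le> E f \<phi>"
proof -
  note pD = EsetD[OF p]
  have "0 \<le> 2*s*(E \<phi> f) + s^2 * E f f" if "s > 0" for s
  proof -
    have eq: "(\<lambda>x. T1 (\<phi> x + s * f x)) = \<phi>"
    proof
      fix x show "T1 (\<phi> x + s * f x) = \<phi> x"
        using pD(2,3)[of x] pD(4)[of x] f0[of x] \<open>s>0\<close>
        by (cases "f x > 0") (auto simp: T1_def mult_pos_pos)
    qed
    have "E \<phi> \<phi> \<le> E (\<lambda>x. \<phi> x + s * f x) (\<lambda>x. \<phi> x + s * f x)"
      using T1E[OF addD[OF pD(1) scaleD[OF f]], of s, unfolded eq] .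
    also have "\<dots> = E \<phi> \<phi> + 2*s*E \<phi> f + s^2 * E f f" by (rule Equad[OF pD(1) f])
    finally show ?thesis by simp
  qed
  from quad_lim[OF this] show ?thesis using Esym[OF f pD(1)] by simp
qed

lemma monoE:
  assumes f: "f \<in> D" and f0: "\<And>x. 0 \<le> f x" and p: "\<phi> \<in> Eset D f" and q: "\<chi> \<in> Eset D f"
    and le: "\<And>x. \<phi> x \<le> \<chi> x"
  shows "E f \<chi> \<le> E f \<phi>"
proof -
  note pD = EsetD[OF p] and qD = EsetD[OF q]
  have "E (\<lambda>x. \<chi> x - \<phi> x) f \<le> 0"
  proof (rule disj[OF diffD[OF qD(1) pD(1)] f _ f0])
    show "0 \<le> \<chi> x - \<phi> x \<and> \<chi> x - \<phi> x \<le> 1" for x using le[of x] pD(2)[of x] qD(3)[of x] by simp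
    show "f x > 0 \<Longrightarrow> \<chi> x - \<phi> x = 0" for x using pD(4)[of x] qD(4)[of x] by simp
  qed
  thus ?thesis using Ediff[OF qD(1) pD(1) f] Esym[OF f pD(1)] Esym[OF f qD(1)] by simp
qed

abbreviation "Kp \<equiv> killing_plus D E"

lemma Kp_lower: "f \<in> D \<Longrightarrow> (\<And>x. 0 \<le> f x) \<Longrightarrow> \<phi> \<in> Eset D f \<Longrightarrow> Kp f \<le> E f \<phi>"
  unfolding killing_plus_def
  by (rule cInf_lower) (auto simp: bdd_below_def intro!: exI[of _ 0] nonneg)

lemma Kp_greatest: "Eset D f \<noteq> {} \<Longrightarrow> (\<And>\<phi>. \<phi> \<in> Eset D f \<Longrightarrow> c \<le> E f \<phi>) \<Longrightarrow> c \<le> Kp f"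
  unfolding killing_plus_def by (rule cInf_greatest) auto

lemma Kp_approx:
  assumes "f \<in> D" "\<And>x. 0 \<le> f x" "Eset D f \<noteq> {}" "\<eta> > 0"
  shows "\<exists>\<psi>\<in>Eset D f. E f \<psi> < Kp f + \<eta>"
proof (rule ccontr)
  assume "\<not> ?thesis"
  hence "Kp f + \<eta> \<le> Kp f" by (intro Kp_greatest[OF assms(3)]) auto
  thus False using assms(4) by simp
qed

lemma D0plusI: "f \<in> D \<Longrightarrow> (\<And>x. 0 \<le> f x) \<Longrightarrow> \<phi> \<in> Eset D f \<Longrightarrow> f \<in> D0plus D"
  unfolding D0plus_def by auto
lemma D0plusD: assumes "f \<in> D0plus D" shows "f \<in> D" "0 \<le> f x" "Eset D f \<noteq> {}"
  using assms unfolding D0plus_def by auto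

lemma Kp_nonneg: "f \<in> D0plus D \<Longrightarrow> 0 \<le> Kp f"
  by (rule Kp_greatest) (auto dest: D0plusD intro: nonneg)


lemma zero_Eset: "(\<lambda>x. 0) \<in> Eset D (\<lambda>x. 0)"
  by (rule EsetI[OF zeroD]) auto

lemma Kp_zero: "Kp (\<lambda>x. 0) = 0"
proof (rule antisym)
  show "Kp (\<lambda>x. 0) \<le> 0" using Kp_lower[OF zeroD _ zero_Eset] Ezero[OF zeroD] by simp
  show "0 \<le> Kp (\<lambda>x. 0)" using zero_Eset by (intro Kp_greatest) (auto simp: Ezero dest: EsetD)
qed

lemma max_Eset: assumes p: "\<phi> \<in> Eset D f" and q: "\<psi> \<in> Eset D g"
  and f0: "\<And>x. 0 \<le> f x" and g0: "\<And>x. 0 \<le> g x"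
  shows "(\<lambda>x. max (\<phi> x) (\<psi> x)) \<in> Eset D (\<lambda>x. f x + g x)"
proof (rule EsetI)
  show "(\<lambda>x. max (\<phi> x) (\<psi> x)) \<in> D" using EsetD(1)[OF p] EsetD(1)[OF q] by (rule maxD)
  fix x
  show "0 \<le> max (\<phi> x) (\<psi> x)" using EsetD(2)[OF p, of x] by simp
  show "max (\<phi> x) (\<psi> x) \<le> 1" using EsetD(3)[OF p, of x] EsetD(3)[OF q, of x] by simp
  assume "f x + g x > 0"
  hence "f x > 0 \<or> g x > 0" using f0[of x] g0[of x] by linarith
  thus "max (\<phi> x) (\<psi> x) = 1" using EsetD(3,4)[OF p, of x] EsetD(3,4)[OF q, of x] by (auto simp: max_def)
qed

lemma D0plus_add: assumes f: "f \<in> D0plus D" and g: "g \<in> D0plus D"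
  shows "(\<lambda>x. f x + g x) \<in> D0plus D"
proof -
  obtain \<phi> \<psi> where p: "\<phi> \<in> Eset D f" and q: "\<psi> \<in> Eset D g" using D0plusD(3)[OF f] D0plusD(3)[OF g] by blast
  have "(\<lambda>x. max (\<phi> x) (\<psi> x)) \<in> Eset D (\<lambda>x. f x + g x)"
    using p q D0plusD(2)[OF f] D0plusD(2)[OF g] by (rule max_Eset)
  thus ?thesis using D0plusD[OF f] D0plusD[OF g] by (intro D0plusI addD) (auto intro: add_nonneg_nonneg)
qed

lemma Kp_add: assumes f: "f \<in> D0plus D" and g: "g \<in> D0plus D"
  shows "Kp (\<lambda>x. f x + g x) = Kp f + Kp g"
proof -
  note fD = D0plusD[OF f] and gD = D0plusD[OF g]
  have fg: "(\<lambda>x. f x + g x) \<in> D0plus D" using f g by (rule D0plus_add)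
  note fgD = D0plusD[OF fg]
  have subf: "Eset D (\<lambda>x. f x + g x) \<subseteq> Eset D f"
    by (rule Eset_mono) (use gD(2) in \<open>force intro: add_pos_nonneg\<close>)
  have subg: "Eset D (\<lambda>x. f x + g x) \<subseteq> Eset D g"
    by (rule Eset_mono) (use fD(2) in \<open>force intro: add_nonneg_pos\<close>)
  show ?thesis
  proof (rule antisym)
    show "Kp f + Kp g \<le> Kp (\<lambda>x. f x + g x)"
    proof (rule Kp_greatest[OF fgD(3)])
      fix \<chi> assume c: "\<chi> \<in> Eset D (\<lambda>x. f x + g x)"
      have "Kp f \<le> E f \<chi>" using c subf fD by (intro Kp_lower) auto
      moreover have "Kp g \<le> E g \<chi>" using c subg gD by (intro Kp_lower) auto
      ultimately show "Kp f + Kp g \<le> E (\<lambda>x. f x + g x) \<chi>"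
        using Eadd[OF fD(1) gD(1) EsetD(1)[OF c]] by simp
    qed
  next
    have key: "Kp (\<lambda>x. f x + g x) \<le> E f \<phi> + E g \<psi>" if p: "\<phi> \<in> Eset D f" and q: "\<psi> \<in> Eset D g" for \<phi> \<psi>
    proof -
      define \<chi> where "\<chi> = (\<lambda>x. max (\<phi> x) (\<psi> x))"
      have c: "\<chi> \<in> Eset D (\<lambda>x. f x + g x)"
        unfolding \<chi>_def using p q fD(2) gD(2) by (rule max_Eset)
      have "Kp (\<lambda>x. f x + g x) \<le> E (\<lambda>x. f x + g x) \<chi>" using c fgD by (intro Kp_lower) auto
      also have "\<dots> = E f \<chi> + E g \<chi>" using Eadd[OF fD(1) gD(1) EsetD(1)[OF c]] .
      also have "E f \<chi> \<le> E f \<phi>" using c subf p fD by (intro monoE) (auto simp: \<chi>_def)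
      also have "E g \<chi> \<le> E g \<psi>" using c subg q gD by (intro monoE) (auto simp: \<chi>_def)
      finally show ?thesis by simp
    qed
    have "Kp (\<lambda>x. f x + g x) - E g \<psi> \<le> Kp f" if q: "\<psi> \<in> Eset D g" for \<psi>
      using key q by (intro Kp_greatest[OF fD(3)]) (simp add: algebra_simps)
    hence "Kp (\<lambda>x. f x + g x) - Kp f \<le> Kp g"
      by (intro Kp_greatest[OF gD(3)]) (simp add: algebra_simps)
    thus "Kp (\<lambda>x. f x + g x) \<le> Kp f + Kp g" by simp
  qed
qed

lemma D0plus_scale: assumes f: "f \<in> D0plus D" and c: "c \<ge> 0" shows "(\<lambda>x. c * f x) \<in> D0plus D"
proof -
  obtain \<phi> where p: "\<phi> \<in> Eset D f" using D0plusD(3)[OF f] by blast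
  have "Eset D f \<subseteq> Eset D (\<lambda>x. c * f x)" by (rule Eset_mono) (use c in \<open>auto simp: zero_less_mult_iff\<close>)
  hence "\<phi> \<in> Eset D (\<lambda>x. c * f x)" using p by blast
  thus ?thesis using D0plusD[OF f] c by (intro D0plusI scaleD) auto
qed

lemma Kp_scale: assumes f: "f \<in> D0plus D" and c: "c \<ge> 0" shows "Kp (\<lambda>x. c * f x) = c * Kp f"
proof (cases "c = 0")
  case True thus ?thesis using Kp_zero by simp
next
  case False
  hence c: "c > 0" using c by simp
  note fD = D0plusD[OF f]
  have eq: "Eset D (\<lambda>x. c * f x) = Eset D f"
    using Eset_mono[of f "\<lambda>x. c * f x"] Eset_mono[of "\<lambda>x. c * f x" f] c
    by (auto simp: zero_less_mult_iff)
  have cf: "(\<lambda>x. c * f x) \<in> D" "\<And>x. 0 \<le> c * f x" using scaleD[OF fD(1)] fD(2) c by auto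
  show ?thesis
  proof (rule antisym)
    show "c * Kp f \<le> Kp (\<lambda>x. c * f x)"
    proof (rule Kp_greatest)
      show "Eset D (\<lambda>x. c * f x) \<noteq> {}" using eq fD(3) by simp
      fix \<phi> assume "\<phi> \<in> Eset D (\<lambda>x. c * f x)"
      hence p: "\<phi> \<in> Eset D f" using eq by simp
      have "Kp f \<le> E f \<phi>" using p fD by (intro Kp_lower) auto
      thus "c * Kp f \<le> E (\<lambda>x. c * f x) \<phi>" using Escale[OF fD(1) EsetD(1)[OF p]] c by simp
    qed
    have "Kp (\<lambda>x. c * f x) / c \<le> Kp f"
    proof (rule Kp_greatest[OF fD(3)])
      fix \<phi> assume p: "\<phi> \<in> Eset D f"
      have "Kp (\<lambda>x. c * f x) \<le> E (\<lambda>x. c * f x) \<phi>" using p eq cf by (intro Kp_lower) auto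
      thus "Kp (\<lambda>x. c * f x) / c \<le> E f \<phi>" using Escale[OF fD(1) EsetD(1)[OF p]] c by (simp add: field_simps)
    qed
    thus "Kp (\<lambda>x. c * f x) \<le> c * Kp f" using c by (simp add: field_simps)
  qed
qed

lemma D0plus_diff: assumes f: "f \<in> D0plus D" and g: "g \<in> D0plus D" and le: "\<And>x. f x \<le> g x"
  shows "(\<lambda>x. g x - f x) \<in> D0plus D"
proof -
  obtain \<phi> where p: "\<phi> \<in> Eset D g" using D0plusD(3)[OF g] by blast
  have "Eset D g \<subseteq> Eset D (\<lambda>x. g x - f x)"
    by (rule Eset_mono) (metis D0plusD(2)[OF f] add_pos_nonneg diff_add_cancel)
  hence "\<phi> \<in> Eset D (\<lambda>x. g x - f x)" using p by blast
  thus ?thesis using D0plusD[OF f] D0plusD[OF g] le by (intro D0plusI diffD) auto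
qed

lemma Kp_mono: assumes f: "f \<in> D0plus D" and g: "g \<in> D0plus D" and le: "\<And>x. f x \<le> g x"
  shows "Kp f \<le> Kp g"
proof -
  have d: "(\<lambda>x. g x - f x) \<in> D0plus D" using assms by (rule D0plus_diff)
  have "Kp g = Kp (\<lambda>x. f x + (g x - f x))" by simp
  also have "\<dots> = Kp f + Kp (\<lambda>x. g x - f x)" using Kp_add[OF f d] .
  finally show ?thesis using Kp_nonneg[OF d] by simp
qed


definition Dz :: "('x \<Rightarrow> real) set" where "Dz = {f \<in> D. Eset D (\<lambda>x. \<bar>f x\<bar>) \<noteq> {}}"

lemma Dz_D: "f \<in> Dz \<Longrightarrow> f \<in> D" unfolding Dz_def by auto
lemma DzE: "f \<in> Dz \<Longrightarrow> Eset D (\<lambda>x. \<bar>f x\<bar>) \<noteq> {}" unfolding Dz_def by auto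
lemma DzI: "f \<in> D \<Longrightarrow> \<phi> \<in> Eset D (\<lambda>x. \<bar>f x\<bar>) \<Longrightarrow> f \<in> Dz" unfolding Dz_def by auto

lemma Dz_sub: assumes f: "f \<in> Dz" and g: "g \<in> D" and s: "\<And>x. g x \<noteq> 0 \<Longrightarrow> f x \<noteq> 0" shows "g \<in> Dz"
proof -
  obtain \<phi> where p: "\<phi> \<in> Eset D (\<lambda>x. \<bar>f x\<bar>)" using DzE[OF f] by blast
  have "Eset D (\<lambda>x. \<bar>f x\<bar>) \<subseteq> Eset D (\<lambda>x. \<bar>g x\<bar>)" by (rule Eset_mono) (use s in force)
  thus ?thesis using p g by (intro DzI) auto
qed

lemma Dz_zero: "(\<lambda>x. 0) \<in> Dz" using zero_Eset by (intro DzI zeroD) auto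

lemma Dz_add: assumes f: "f \<in> Dz" and g: "g \<in> Dz" shows "(\<lambda>x. f x + g x) \<in> Dz"
proof -
  obtain \<phi> \<psi> where p: "\<phi> \<in> Eset D (\<lambda>x. \<bar>f x\<bar>)" and q: "\<psi> \<in> Eset D (\<lambda>x. \<bar>g x\<bar>)"
    using DzE[OF f] DzE[OF g] by blast
  have m: "(\<lambda>x. max (\<phi> x) (\<psi> x)) \<in> Eset D (\<lambda>x. \<bar>f x\<bar> + \<bar>g x\<bar>)" using p q by (rule max_Eset) auto
  have "Eset D (\<lambda>x. \<bar>f x\<bar> + \<bar>g x\<bar>) \<subseteq> Eset D (\<lambda>x. \<bar>f x + g x\<bar>)" by (rule Eset_mono) auto
  thus ?thesis using m addD[OF Dz_D[OF f] Dz_D[OF g]] by (intro DzI) auto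
qed

lemma Dz_scale: "f \<in> Dz \<Longrightarrow> (\<lambda>x. c * f x) \<in> Dz"
  by (rule Dz_sub) (auto intro: scaleD Dz_D)
lemma Dz_mult: "f \<in> Dz \<Longrightarrow> g \<in> D \<Longrightarrow> (\<lambda>x. f x * g x) \<in> Dz"
  by (rule Dz_sub) (auto intro: multD Dz_D)
lemma Dz_mult2: "f \<in> D \<Longrightarrow> g \<in> Dz \<Longrightarrow> (\<lambda>x. f x * g x) \<in> Dz"
  by (rule Dz_sub) (auto intro: multD Dz_D)
lemma Dz_pos: assumes "f \<in> Dz" shows "(\<lambda>x. max (f x) 0) \<in> Dz"
  by (rule Dz_sub[OF assms posD[OF Dz_D[OF assms]]]) (auto simp: max_def split: if_splits)
lemma Dz_negp: assumes "f \<in> Dz" shows "(\<lambda>x. max (- f x) 0) \<in> Dz"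
  by (rule Dz_sub[OF assms negpD[OF Dz_D[OF assms]]]) (auto simp: max_def split: if_splits)
lemma Dz_abs: "f \<in> Dz \<Longrightarrow> (\<lambda>x. \<bar>f x\<bar>) \<in> Dz"
  by (rule Dz_sub) (auto intro: absD Dz_D)
lemma Dz_D0plus: "f \<in> Dz \<Longrightarrow> (\<And>x. 0 \<le> f x) \<Longrightarrow> f \<in> D0plus D"
  using DzE[of f] by (auto intro!: D0plusI Dz_D simp: abs_of_nonneg)
lemma D0plus_Dz: assumes f: "f \<in> D0plus D" shows "f \<in> Dz"
proof -
  obtain \<phi> where p: "\<phi> \<in> Eset D f" using D0plusD(3)[OF f] by blast
  have "(\<lambda>x. \<bar>f x\<bar>) = f" using D0plusD(2)[OF f] by (intro ext) simp
  thus ?thesis using p D0plusD(1)[OF f] by (intro DzI[of f \<phi>]) auto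
qed

lemma lincomb_closed:
  fixes S :: "('x \<Rightarrow> real) set" and n :: nat
  assumes "(\<lambda>x. 0) \<in> S" "\<And>f g. f\<in>S \<Longrightarrow> g\<in>S \<Longrightarrow> (\<lambda>x. f x + g x) \<in> S"
    "\<And>f c. f \<in> S \<Longrightarrow> (\<lambda>x. c * f x) \<in> S" "\<forall>i<n. g i \<in> S"
  shows "(\<lambda>x. \<Sum>i<n. c i * g i x) \<in> S"
  using assms(4)
proof (induction n)
  case 0 thus ?case using assms(1) by simp
next
  case (Suc n)
  have "(\<lambda>x. (\<Sum>i<n. c i * g i x) + c n * g n x) \<in> S"
    using Suc by (intro assms(2,3)) auto
  thus ?case by simp
qed

lemma D0_eq: "D0 D = Dz"
proof
  show "D0 D \<subseteq> Dz"
  proof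
    fix f assume "f \<in> D0 D"
    then obtain n :: nat and c :: "nat \<Rightarrow> real" and g :: "nat \<Rightarrow> 'x \<Rightarrow> real" where g: "\<forall>i<n. g i \<in> D0plus D" and f: "f = (\<lambda>x. \<Sum>i<n. c i * g i x)"
      unfolding D0_def mem_Collect_eq by blast
    show "f \<in> Dz" unfolding f
      by (rule lincomb_closed[OF Dz_zero Dz_add Dz_scale]) (use g D0plus_Dz in auto)
  qed
  show "Dz \<subseteq> D0 D"
  proof
    fix f assume f: "f \<in> Dz"
    define g where "g = (\<lambda>i::nat. if i = 0 then (\<lambda>x. max (f x) 0) else (\<lambda>x. max (- f x) 0))"
    define c where "c = (\<lambda>i::nat. if i = 0 then (1::real) else -1)"
    have "\<forall>i<2. g i \<in> D0plus D" unfolding g_def using Dz_pos[OF f] Dz_negp[OF f]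
      by (auto intro!: Dz_D0plus)
    moreover have "f = (\<lambda>x. \<Sum>i<2. c i * g i x)"
      by (rule ext) (simp add: g_def c_def eval_nat_numeral max_def)
    ultimately show "f \<in> D0 D" unfolding D0_def by blast
  qed
qed

lemma max_mult_distrib_left_pos: "c \<ge> 0 \<Longrightarrow> max (c * a) 0 = c * max a (0::real)"
  by (simp add: max_mult_distrib_left)

abbreviation "K \<equiv> killing D E"

lemma K_pos: "f \<in> D0plus D \<Longrightarrow> K f = Kp f"
proof -
  assume f: "f \<in> D0plus D"
  have "(\<lambda>x. max (f x) 0) = f" "(\<lambda>x. max (- f x) 0) = (\<lambda>x. 0)"
    using D0plusD(2)[OF f] by (auto intro!: ext simp: max_absorb1 max_absorb2)
  thus ?thesis unfolding killing_def using Kp_zero by simp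
qed

lemma K_zero: "K (\<lambda>x. 0) = 0" unfolding killing_def using Kp_zero by simp

lemma maxid: "max (a+b) 0 + max (-a) 0 + max (-b) 0 = max (-(a+b)) 0 + max a 0 + max b (0::real)"
  by (simp add: max_def)

lemma K_add: assumes f: "f \<in> Dz" and g: "g \<in> Dz" shows "K (\<lambda>x. f x + g x) = K f + K g"
proof -
  define P where "P = (\<lambda>x. max (f x + g x) 0)"
  define N where "N = (\<lambda>x. max (- (f x + g x)) 0)"
  define fp where "fp = (\<lambda>x. max (f x) 0)"
  define fn where "fn = (\<lambda>x. max (- f x) 0)"
  define gp where "gp = (\<lambda>x. max (g x) 0)"
  define gn where "gn = (\<lambda>x. max (- g x) 0)"
  have fg: "(\<lambda>x. f x + g x) \<in> Dz" using f g by (rule Dz_add)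
  have ins: "P \<in> D0plus D" "N \<in> D0plus D" "fp \<in> D0plus D" "fn \<in> D0plus D" "gp \<in> D0plus D" "gn \<in> D0plus D"
    unfolding P_def N_def fp_def fn_def gp_def gn_def
    using Dz_pos[OF fg] Dz_negp[OF fg] Dz_pos[OF f] Dz_negp[OF f] Dz_pos[OF g] Dz_negp[OF g]
    by (auto intro!: Dz_D0plus)
  have "Kp (\<lambda>x. (P x + fn x) + gn x) = Kp (\<lambda>x. (N x + fp x) + gp x)"
    by (rule arg_cong[where f=Kp], rule ext) (simp add: P_def N_def fp_def fn_def gp_def gn_def maxid)
  hence "Kp P + Kp fn + Kp gn = Kp N + Kp fp + Kp gp"
    using Kp_add[OF D0plus_add[OF ins(1,4)] ins(6)] Kp_add[OF ins(1,4)]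
      Kp_add[OF D0plus_add[OF ins(2,3)] ins(5)] Kp_add[OF ins(2,3)] by simp
  thus ?thesis unfolding killing_def P_def N_def fp_def fn_def gp_def gn_def by simp
qed

lemma K_scale: assumes f: "f \<in> Dz" shows "K (\<lambda>x. c * f x) = c * K f"
proof -
  have fp: "(\<lambda>x. max (f x) 0) \<in> D0plus D" and fn: "(\<lambda>x. max (- f x) 0) \<in> D0plus D"
    using Dz_pos[OF f] Dz_negp[OF f] by (auto intro!: Dz_D0plus)
  show ?thesis
  proof (cases "c \<ge> 0")
    case True
    have "(\<lambda>x. max (c * f x) 0) = (\<lambda>x. c * max (f x) 0)" "(\<lambda>x. max (- (c * f x)) 0) = (\<lambda>x. c * max (- f x) 0)"
      using max_mult_distrib_left_pos[OF True, of "f _"] max_mult_distrib_left_pos[OF True, of "- f _"]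
      by (auto intro!: ext)
    thus ?thesis unfolding killing_def using Kp_scale[OF fp True] Kp_scale[OF fn True] by (simp add: algebra_simps)
  next
    case False
    hence c: "-c \<ge> 0" by simp
    have "(\<lambda>x. max (c * f x) 0) = (\<lambda>x. (-c) * max (- f x) 0)" "(\<lambda>x. max (- (c * f x)) 0) = (\<lambda>x. (-c) * max (f x) 0)"
      using max_mult_distrib_left_pos[OF c, of "f _"] max_mult_distrib_left_pos[OF c, of "- f _"]
      by (auto intro!: ext)
    thus ?thesis unfolding killing_def using Kp_scale[OF fp c] Kp_scale[OF fn c] by (simp add: algebra_simps)
  qed
qed

end


context KS begin

lemma sqD: "f \<in> D \<Longrightarrow> (\<lambda>x. (f x)^2) \<in> D"
  using multD[of f f] by (simp add: power2_eq_square)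

lemma sq_D0plus: assumes f: "f \<in> Dz" shows "(\<lambda>x. (f x)^2) \<in> D0plus D"
  by (rule Dz_D0plus[OF Dz_sub[OF f sqD[OF Dz_D[OF f]]]]) auto

lemma sq_induct:
  assumes d: "\<delta> > 0"
  shows "\<forall>g. g \<in> D \<and> (\<forall>x. 0 \<le> g x) \<and> \<psi> \<in> Eset D g \<and> (\<forall>x. g x \<le> real N * \<delta>) \<longrightarrow>
            Kp (\<lambda>x. (g x)^2) \<le> E g g + \<delta> * E g \<psi>"
proof (induction N)
  case 0
  show ?case
  proof (intro allI impI)
    fix g assume g: "g \<in> D \<and> (\<forall>x. 0 \<le> g x) \<and> \<psi> \<in> Eset D g \<and> (\<forall>x. g x \<le> real 0 * \<delta>)"
    hence g0: "g = (\<lambda>x. 0)" by (intro ext) (simp add: order_antisym)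
    show "Kp (\<lambda>x. (g x)^2) \<le> E g g + \<delta> * E g \<psi>"
      using Kp_zero Ezero[OF zeroD] Ezero[OF EsetD(1)[of \<psi> g]] g unfolding g0 by simp
  qed
next
  case (Suc N)
  show ?case
  proof (intro allI impI)
    fix g assume "g \<in> D \<and> (\<forall>x. 0 \<le> g x) \<and> \<psi> \<in> Eset D g \<and> (\<forall>x. g x \<le> real (Suc N) * \<delta>)"
    hence gD: "g \<in> D" and g0: "\<And>x. 0 \<le> g x" and p: "\<psi> \<in> Eset D g" and gb: "\<And>x. g x \<le> real (Suc N) * \<delta>"
      by auto
    define a where "a = (\<lambda>x. min (g x) \<delta>)"
    define b where "b = (\<lambda>x. g x - a x)"
    have aD: "a \<in> D" unfolding a_def using gD d by (rule minconstD)
    have bD: "b \<in> D" unfolding b_def using gD aD by (rule diffD)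
    have a0: "\<And>x. 0 \<le> a x" and ad: "\<And>x. a x \<le> \<delta>" using g0 d by (auto simp: a_def)
    have b0: "\<And>x. 0 \<le> b x" by (simp add: b_def a_def)
    have dN: "0 \<le> \<delta> * real N" using d by simp
    have bb: "\<And>x. b x \<le> real N * \<delta>" using gb dN by (auto simp: b_def a_def min_def algebra_simps)
    have gab: "g = (\<lambda>x. a x + 1 * b x)" by (simp add: b_def)
    have pa: "\<psi> \<in> Eset D a" using p Eset_mono[of a g] by (auto simp: a_def)
    have "Eset D g \<subseteq> Eset D b" by (rule Eset_mono) (use d in \<open>auto simp: b_def a_def min_def split: if_splits\<close>)
    hence pb: "\<psi> \<in> Eset D b" using p by blast
    have ab: "(\<lambda>x. (1/\<delta>) * a x) \<in> Eset D b"
    proof (rule EsetI)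
      show "(\<lambda>x. (1/\<delta>) * a x) \<in> D" using aD by (rule scaleD)
      fix x
      show "0 \<le> 1 / \<delta> * a x" using a0[of x] d by simp
      show "1 / \<delta> * a x \<le> 1" using ad[of x] d by (simp add: field_simps)
      show "0 < b x \<Longrightarrow> 1 / \<delta> * a x = 1" using d by (auto simp: b_def a_def min_def)
    qed
    have IH: "Kp (\<lambda>x. (b x)^2) \<le> E b b + \<delta> * E b \<psi>" using Suc bD b0 pb bb by blast
    have a2: "(\<lambda>x. (a x)^2) \<in> D0plus D"
      by (rule D0plusI[OF sqD[OF aD] _ subsetD[OF Eset_mono pa]]) (use d g0 in \<open>auto simp: a_def min_def le_less split: if_splits\<close>)
    have b2: "(\<lambda>x. (b x)^2) \<in> D0plus D"
      by (rule D0plusI[OF sqD[OF bD] _ subsetD[OF Eset_mono pb]]) (use b0 in \<open>auto simp: le_less\<close>)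
    have aP: "a \<in> D0plus D" using aD a0 pa by (rule D0plusI)
    have bP: "b \<in> D0plus D" using bD b0 pb by (rule D0plusI)
    have b2d: "(\<lambda>x. (2*\<delta>) * b x) \<in> D0plus D" using bP d by (intro D0plus_scale) auto
    have ada: "(\<lambda>x. \<delta> * a x) \<in> D0plus D" using aP d by (intro D0plus_scale) auto
    have sq: "(\<lambda>x. (g x)^2) = (\<lambda>x. (a x)^2 + ((2*\<delta>) * b x + (b x)^2))"
    proof
      fix x show "(g x)^2 = (a x)^2 + ((2*\<delta>) * b x + (b x)^2)"
        by (cases "g x \<le> \<delta>") (auto simp: a_def b_def min_def power2_eq_square algebra_simps)
    qed
    have "Kp (\<lambda>x. (g x)^2) = Kp (\<lambda>x. (a x)^2) + (Kp (\<lambda>x. (2*\<delta>) * b x) + Kp (\<lambda>x. (b x)^2))"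
      unfolding sq using Kp_add[OF a2 D0plus_add[OF b2d b2]] Kp_add[OF b2d b2] by simp
    also have "Kp (\<lambda>x. (a x)^2) \<le> Kp (\<lambda>x. \<delta> * a x)"
      using a2 ada by (rule Kp_mono) (use a0 ad in \<open>auto simp: power2_eq_square intro: mult_right_mono\<close>)
    also have "Kp (\<lambda>x. \<delta> * a x) = \<delta> * Kp a" using aP d by (intro Kp_scale) auto
    also have "Kp a \<le> E a \<psi>" using aD a0 pa by (rule Kp_lower)
    also have "Kp (\<lambda>x. (2*\<delta>) * b x) = (2*\<delta>) * Kp b" using bP d by (intro Kp_scale) auto
    also have "Kp b \<le> E b (\<lambda>x. (1/\<delta>) * a x)" using bD b0 ab by (rule Kp_lower)
    also have "E b (\<lambda>x. (1/\<delta>) * a x) = (1/\<delta>) * E a b" using Escale2[OF aD bD, of "1/\<delta>"] Esym[OF aD bD] by simp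
    also note IH
    finally have "Kp (\<lambda>x. (g x)^2) \<le> \<delta> * E a \<psi> + (2 * E a b + (E b b + \<delta> * E b \<psi>))"
      using d by (simp add: mult_left_mono field_simps)
    also have "\<dots> \<le> E g g + \<delta> * E g \<psi>"
    proof -
      have "E g g = E a a + 2*1*E a b + 1^2 * E b b" unfolding gab by (rule Equad[OF aD bD])
      moreover have "E g \<psi> = E a \<psi> + E b \<psi>" unfolding gab using Eadd[OF aD bD EsetD(1)[OF p]] by simp
      moreover have "0 \<le> E a a" using aD by (rule Epos)
      ultimately show ?thesis by (simp add: algebra_simps)
    qed
    finally show "Kp (\<lambda>x. (g x)^2) \<le> E g g + \<delta> * E g \<psi>" .
  qed
qed

lemma sq_main: assumes g: "g \<in> D0plus D" shows "Kp (\<lambda>x. (g x)^2) \<le> E g g"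
proof -
  obtain \<psi> where p: "\<psi> \<in> Eset D g" using D0plusD(3)[OF g] by blast
  obtain C where C: "\<And>x. \<bar>g x\<bar> \<le> C" using bddD[OF D0plusD(1)[OF g]] by blast
  show ?thesis
  proof (rule eps_lim)
    fix \<delta> :: real assume d: "\<delta> > 0"
    define N where "N = nat \<lceil>C / \<delta>\<rceil>"
    have "C / \<delta> \<le> real N" unfolding N_def by linarith
    hence CN: "C \<le> real N * \<delta>" using d by (simp add: field_simps)
    have "\<forall>x. g x \<le> real N * \<delta>" using C CN by (smt (verit) abs_ge_self)
    thus "Kp (\<lambda>x. (g x)^2) \<le> E g g + \<delta> * E g \<psi>"
      using sq_induct[OF d, of \<psi> N] D0plusD[OF g] p by blast
  qed
qed

lemma abs_le: assumes f: "f \<in> D" shows "E (\<lambda>x. \<bar>f x\<bar>) (\<lambda>x. \<bar>f x\<bar>) \<le> E f f"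
proof -
  define p where "p = (\<lambda>x. max (f x) 0)"
  define n where "n = (\<lambda>x. max (- f x) 0)"
  have pD: "p \<in> D" and nD: "n \<in> D" unfolding p_def n_def using posD[OF f] negpD[OF f] by auto
  have "E p n \<le> 0" using pD nD by (rule disjB) (auto simp: p_def n_def max_def split: if_splits)
  moreover have "(\<lambda>x. \<bar>f x\<bar>) = (\<lambda>x. p x + 1 * n x)" by (auto intro!: ext simp: p_def n_def max_def)
  moreover have "f = (\<lambda>x. p x + (-1) * n x)" by (auto intro!: ext simp: p_def n_def max_def)
  ultimately show ?thesis using Equad[OF pD nD, of 1] Equad[OF pD nD, of "-1"] by simp
qed

lemma part1: assumes f: "f \<in> Dz" shows "K (\<lambda>x. (f x)^2) \<le> E f f"
proof -
  have a: "(\<lambda>x. \<bar>f x\<bar>) \<in> D0plus D" using Dz_abs[OF f] by (rule Dz_D0plus) auto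
  have "K (\<lambda>x. (\<bar>f x\<bar>)^2) = Kp (\<lambda>x. (\<bar>f x\<bar>)^2)" using sq_D0plus[OF Dz_abs[OF f]] by (rule K_pos)
  also have "\<dots> \<le> E (\<lambda>x. \<bar>f x\<bar>) (\<lambda>x. \<bar>f x\<bar>)" using a by (rule sq_main)
  also have "\<dots> \<le> E f f" using Dz_D[OF f] by (rule abs_le)
  finally show ?thesis by simp
qed

end


context KS begin

definition Q where "Q = (\<lambda>f g. E f g - K (\<lambda>x. f x * g x))"

lemma Q_bil: "bilinear_form Dz Q"
  unfolding bilinear_form_def
proof (intro conjI ballI allI)
  fix f g h assume f: "f \<in> Dz" and g: "g \<in> Dz" and h: "h \<in> Dz"
  have "(\<lambda>x. (f x + g x) * h x) = (\<lambda>x. f x * h x + g x * h x)" by (simp add: algebra_simps)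
  hence "K (\<lambda>x. (f x + g x) * h x) = K (\<lambda>x. f x * h x) + K (\<lambda>x. g x * h x)"
    using K_add[OF Dz_mult[OF f Dz_D[OF h]] Dz_mult[OF g Dz_D[OF h]]] by simp
  thus "Q (\<lambda>x. f x + g x) h = Q f h + Q g h"
    unfolding Q_def using Eadd[OF Dz_D[OF f] Dz_D[OF g] Dz_D[OF h]] by simp
next
  fix f g and c :: real assume f: "f \<in> Dz" and g: "g \<in> Dz"
  have "(\<lambda>x. c * f x * g x) = (\<lambda>x. c * (f x * g x))" by (simp add: algebra_simps)
  hence "K (\<lambda>x. c * f x * g x) = c * K (\<lambda>x. f x * g x)"
    using K_scale[OF Dz_mult[OF f Dz_D[OF g]]] by simp
  thus "Q (\<lambda>x. c * f x) g = c * Q f g"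
    unfolding Q_def using Escale[OF Dz_D[OF f] Dz_D[OF g]] by (simp add: algebra_simps)
next
  fix f g assume f: "f \<in> Dz" and g: "g \<in> Dz"
  show "Q f g = Q g f" unfolding Q_def using Esym[OF Dz_D[OF f] Dz_D[OF g]] by (simp add: mult.commute)
next
  fix f assume f: "f \<in> Dz"
  show "0 \<le> Q f f" unfolding Q_def using part1[OF f] by (simp add: power2_eq_square)
qed

lemma Q_contr: assumes f: "f \<in> Dz"
  shows "(\<lambda>x. T1 (f x)) \<in> Dz \<and> Q (\<lambda>x. T1 (f x)) (\<lambda>x. T1 (f x)) \<le> Q f f"
proof -
  have fD: "f \<in> D" using f by (rule Dz_D)
  define a where "a = (\<lambda>x. T1 (f x))"
  define n where "n = (\<lambda>x. max (- f x) 0)"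
  define b where "b = (\<lambda>x. max (f x) 0 - a x)"
  have aD: "a \<in> D" unfolding a_def using fD by (rule T1D)
  have nD: "n \<in> D" unfolding n_def using fD by (rule negpD)
  have bD: "b \<in> D" unfolding b_def using posD[OF fD] aD by (rule diffD)
  have aZ: "a \<in> Dz" by (rule Dz_sub[OF f aD]) (auto simp: a_def T1_def)
  have nZ: "n \<in> Dz" by (rule Dz_sub[OF f nD]) (auto simp: n_def max_def split: if_splits)
  have bZ: "b \<in> Dz" by (rule Dz_sub[OF f bD]) (auto simp: b_def a_def T1_def max_def min_def split: if_splits)
  have a01: "\<And>x. 0 \<le> a x \<and> a x \<le> 1" by (auto simp: a_def T1_def)
  have n0: "\<And>x. 0 \<le> n x" by (simp add: n_def)
  have b0: "\<And>x. 0 \<le> b x" by (auto simp: b_def a_def T1_def max_def min_def)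
  define w where "w = (\<lambda>x. b x + (-1) * n x)"
  have wD: "w \<in> D" unfolding w_def using bD scaleD[OF nD] by (rule addD)
  have fw: "f = (\<lambda>x. a x + 1 * w x)"
    by (rule ext) (auto simp: w_def b_def n_def a_def T1_def max_def min_def)
  have Eff: "E f f = E a a + 2 * (E a b - E a n) + (E b b - 2 * E b n + E n n)"
  proof -
    have "E f f = E a a + 2*1*E a w + 1^2 * E w w" unfolding fw by (rule Equad[OF aD wD])
    moreover have "E a w = E a b - E a n" unfolding w_def using Ediff2[OF bD nD aD] by simp
    moreover have "E w w = E b b + 2*(-1)*E b n + (-1)^2 * E n n" unfolding w_def by (rule Equad[OF bD nD])
    ultimately show ?thesis by simp
  qed
  have sq: "(\<lambda>x. f x * f x) = (\<lambda>x. a x * a x + (2 * b x + (b x * b x + n x * n x)))"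
    by (rule ext) (auto simp: b_def n_def a_def T1_def max_def min_def algebra_simps)
  have aaZ: "(\<lambda>x. a x * a x) \<in> Dz" using aZ aD by (rule Dz_mult)
  have bbZ: "(\<lambda>x. b x * b x) \<in> Dz" using bZ bD by (rule Dz_mult)
  have nnZ: "(\<lambda>x. n x * n x) \<in> Dz" using nZ nD by (rule Dz_mult)
  have b2Z: "(\<lambda>x. 2 * b x) \<in> Dz" using bZ by (rule Dz_scale)
  have Kff: "K (\<lambda>x. f x * f x) = K (\<lambda>x. a x * a x) + (2 * K b + (K (\<lambda>x. b x * b x) + K (\<lambda>x. n x * n x)))"
    unfolding sq using K_add[OF aaZ Dz_add[OF b2Z Dz_add[OF bbZ nnZ]]] K_add[OF b2Z Dz_add[OF bbZ nnZ]]
      K_add[OF bbZ nnZ] K_scale[OF bZ, of 2] by simp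
  have ab: "a \<in> Eset D b"
  proof (rule EsetI[OF aD])
    fix x
    show "0 \<le> a x" "a x \<le> 1" using a01[of x] by auto
    show "0 < b x \<Longrightarrow> a x = 1" by (auto simp: b_def a_def T1_def max_def min_def split: if_splits)
  qed
  have bP: "b \<in> D0plus D" using bD b0 ab by (rule D0plusI)
  have Kb: "K b \<le> E a b" using K_pos[OF bP] Kp_lower[OF bD b0 ab] Esym[OF aD bD] by simp
  have "E a n \<le> 0" using aD nD a01 n0 by (rule disj) (auto simp: n_def a_def T1_def max_def min_def split: if_splits)
  moreover have "E b n \<le> 0" using bD nD b0 n0 by (rule disjB) (auto simp: n_def b_def a_def T1_def max_def min_def split: if_splits)
  moreover have "K (\<lambda>x. b x * b x) \<le> E b b" using part1[OF bZ] by (simp add: power2_eq_square)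
  moreover have "K (\<lambda>x. n x * n x) \<le> E n n" using part1[OF nZ] by (simp add: power2_eq_square)
  ultimately have "Q a a \<le> Q f f" unfolding Q_def using Eff Kff Kb by simp
  thus ?thesis using aZ unfolding a_def by simp
qed

lemma Q_uc: "unit_contraction_operates Dz Q"
  unfolding unit_contraction_operates_def using Q_contr by blast

lemma inf_zero:
  fixes S :: "real set"
  assumes "S \<noteq> {}" "\<And>s. s \<in> S \<Longrightarrow> 0 \<le> s" "\<And>\<eta>. \<eta> > 0 \<Longrightarrow> \<exists>s\<in>S. s < \<eta>"
  shows "Inf S = 0"
proof (rule antisym)
  show "0 \<le> Inf S" using assms(1,2) by (rule cInf_greatest)
  show "Inf S \<le> 0"
  proof (rule ccontr)
    assume "\<not> Inf S \<le> 0"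
    then obtain s where "s \<in> S" "s < Inf S" using assms(3)[of "Inf S"] by auto
    moreover have "Inf S \<le> s" using \<open>s \<in> S\<close> assms(2) by (intro cInf_lower) (auto simp: bdd_below_def)
    ultimately show False by simp
  qed
qed

lemma Eset_Dz: "\<phi> \<in> Eset Dz g \<Longrightarrow> \<phi> \<in> Eset D g"
  unfolding Eset_def using Dz_D by auto

lemma kz: assumes g: "g \<in> Dz" and g0: "\<And>x. 0 \<le> g x" shows "killing_plus Dz Q g = 0"
  unfolding killing_plus_def
proof (rule inf_zero)
  have gP: "g \<in> D0plus D" using g g0 by (rule Dz_D0plus)
  note gD = D0plusD[OF gP]
  have gphi: "(\<lambda>x. g x * \<phi> x) = g" if "\<phi> \<in> Eset D g" for \<phi>
  proof
    fix x show "g x * \<phi> x = g x" using EsetD(4)[OF that, of x] g0[of x] by (cases "g x > 0") auto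
  qed
  show "0 \<le> s" if sS: "s \<in> (\<lambda>\<phi>. Q g \<phi>) ` Eset Dz g" for s
  proof -
    obtain \<phi> where p: "\<phi> \<in> Eset Dz g" and s: "s = Q g \<phi>" using sS by blast
    have p': "\<phi> \<in> Eset D g" using p by (rule Eset_Dz)
    have "K g \<le> E g \<phi>" using K_pos[OF gP] Kp_lower[OF gD(1) g0 p'] by simp
    thus ?thesis unfolding s Q_def gphi[OF p'] by simp
  qed
  have approx: "\<exists>\<phi>\<in>Eset Dz g. Q g \<phi> < \<eta>" if eta: "\<eta> > 0" for \<eta>
  proof -
    obtain \<psi> where p: "\<psi> \<in> Eset D g" and pl: "E g \<psi> < Kp g + \<eta>/2"
      using Kp_approx[OF gD(1) g0 gD(3)] eta by (meson half_gt_zero)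
    note pD = EsetD[OF p]
    define \<chi> where "\<chi> = (\<lambda>x. min (2 * \<psi> x) 1)"
    define \<phi> where "\<phi> = (\<lambda>x. 2 * \<psi> x - \<chi> x)"
    have cD: "\<chi> \<in> D" unfolding \<chi>_def using scaleD[OF pD(1)] by (rule stoneD)
    have sD: "(\<lambda>x. 2 * \<psi> x) \<in> D" using pD(1) by (rule scaleD)
    have phD: "\<phi> \<in> D" unfolding \<phi>_def using sD cD by (rule diffD)
    have cg: "\<chi> \<in> Eset D g"
    proof (rule EsetI[OF cD])
      fix x
      show "0 \<le> \<chi> x" "\<chi> x \<le> 1" using pD(2)[of x] by (auto simp: \<chi>_def)
      show "0 < g x \<Longrightarrow> \<chi> x = 1" using pD(4)[of x] by (auto simp: \<chi>_def)
    qed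
    have cphi: "\<chi> \<in> Eset D (\<lambda>x. \<bar>\<phi> x\<bar>)"
    proof (rule EsetI[OF cD])
      fix x
      show "0 \<le> \<chi> x" "\<chi> x \<le> 1" using pD(2)[of x] by (auto simp: \<chi>_def)
      show "0 < \<bar>\<phi> x\<bar> \<Longrightarrow> \<chi> x = 1" by (auto simp: \<chi>_def \<phi>_def min_def split: if_splits)
    qed
    have phZ: "\<phi> \<in> Dz" using phD cphi by (rule DzI)
    have phE: "\<phi> \<in> Eset Dz g"
      unfolding Eset_def using phZ pD(2,3) pD(4)
      by (auto simp: \<phi>_def \<chi>_def min_def)
    have phE': "\<phi> \<in> Eset D g" using phE by (rule Eset_Dz)
    have "E g \<phi> = 2 * E g \<psi> - E g \<chi>"
      unfolding \<phi>_def using Ediff2[OF sD cD gD(1)] Escale2[OF pD(1) gD(1)] by simp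
    moreover have "Kp g \<le> E g \<chi>" using gD(1) g0 cg by (rule Kp_lower)
    moreover have "Q g \<phi> = E g \<phi> - Kp g" unfolding Q_def gphi[OF phE'] K_pos[OF gP] ..
    ultimately have "Q g \<phi> < \<eta>" using pl by simp
    thus ?thesis using phE by blast
  qed
  show "\<exists>s\<in>(\<lambda>\<phi>. Q g \<phi>) ` Eset Dz g. s < \<eta>" if "\<eta> > 0" for \<eta>
    using approx[OF that] by blast
  show "(\<lambda>\<phi>. Q g \<phi>) ` Eset Dz g \<noteq> {}" using approx[of 1] by auto
qed

lemma D0Dz: "D0 Dz \<subseteq> Dz"
proof
  fix f assume "f \<in> D0 Dz"
  then obtain n :: nat and c :: "nat \<Rightarrow> real" and g :: "nat \<Rightarrow> 'x \<Rightarrow> real" where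
    g: "\<forall>i<n. g i \<in> D0plus Dz" and f: "f = (\<lambda>x. \<Sum>i<n. c i * g i x)"
    unfolding D0_def mem_Collect_eq by blast
  show "f \<in> Dz" unfolding f
    by (rule lincomb_closed[OF Dz_zero Dz_add Dz_scale]) (use g in \<open>auto simp: D0plus_def\<close>)
qed

lemma Q_zero_killing: "f \<in> D0 Dz \<Longrightarrow> killing Dz Q f = 0"
proof -
  assume "f \<in> D0 Dz"
  hence f: "f \<in> Dz" using D0Dz by blast
  show ?thesis unfolding killing_def using kz[OF Dz_pos[OF f]] kz[OF Dz_negp[OF f]] by simp
qed

end


theorem propositionP:
  fixes D :: "('x \<Rightarrow> real) set"
    and E :: "('x \<Rightarrow> real) \<Rightarrow> ('x \<Rightarrow> real) \<Rightarrow> real"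
  assumes "algebra_vector_lattice D"
    and "bounded_functions D"
    and "stone_property D"
    and "bilinear_form D E"
    and "unit_contraction_operates D E"
  shows "(\<forall>f\<in>D0 D. killing D E (\<lambda>x. (f x)\<^sup>2) \<le> E f f) \<and>
         (let Q = (\<lambda>f g. E f g - killing D E (\<lambda>x. f x * g x)) in
            bilinear_form (D0 D) Q \<and>
            unit_contraction_operates (D0 D) Q \<and>
            (\<forall>f\<in>D0 (D0 D). killing (D0 D) Q f = 0))"
proof -
  interpret KS D E using assms by unfold_locales
  have Qe: "(\<lambda>f g. E f g - killing D E (\<lambda>x. f x * g x)) = Q" by (simp add: Q_def)
  show ?thesis
    unfolding Let_def Qe D0_eq
    using part1 Q_bil Q_uc Q_zero_killing by blast
qed

end
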